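(* Let $S$ be a finite set of anchored rectangles in the plane, where the $x$-coordinates of the top-right vertices are pairwise distinct (and likewise their $y$-coordinates). Store $S$ in a leaf-oriented red-black tree $\mathcal{T}$ keyed by $r_x$, and color each $r\in S$ by $\mathit{col}(r):=\max_{v\in N(r)}\mathrm{height}(v)$, where $N(r)$ consists of the leaf storing $r$ together with all internal nodes $v$ with $r_{\max}(\mathit{right}(v))=r$. Then this coloring is conflict-free with respect to points: for every point $q\in\mathbb{R}^2$ contained in at least one rectangle of $S$, some rectangle of $S$ containing $q$ has a color that no other rectangle of $S$ containing $q$ has.
   Context: A rectangle is anchored if its bottom-left vertex is the origin; for such a rectangle $r$, $(r_x,r_y)$ denotes its top-right vertex. A leaf-oriented red-black tree stores the keys in its leaves (one rectangle per leaf, ordered by $r_x$), and each internal node stores a splitting value strictly between consecutive keys, with keys smaller than it in the left subtree and larger in the right subtree. For a node $v$, $\mathit{left}(v)$, $\mathit{right}(v)$ denote its children, $S(v)$ is the set of rectangles stored in leaves of the subtree rooted at $v$, $r_{\max}(v)$ is the rectangle $r\in S(v)$ maximizing $r_y$, and $\mathrm{height}(v)$ is the height of the subtree rooted at $v$ (0 for a leaf). *)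

theory Defs
  imports Complex_Main
begin

text \<open>An anchored rectangle is identified with its top-right vertex (r_x, r_y);
  its bottom-left vertex is the origin.  It is the closed set [0,r_x] x [0,r_y].\<close>
type_synonym rect = "real \<times> real"

definition anchored :: "rect \<Rightarrow> bool" where
  "anchored r \<longleftrightarrow> fst r > 0 \<and> snd r > 0"

definition contains :: "rect \<Rightarrow> real \<times> real \<Rightarrow> bool" where
  "contains r q \<longleftrightarrow> 0 \<le> fst q \<and> fst q \<le> fst r \<and> 0 \<le> snd q \<and> snd q \<le> snd r"

datatype color = Red | Black

datatype tree = Leaf rect | Node color tree real tree

fun leaves :: "tree \<Rightarrow> rect list" where
  "leaves (Leaf r) = [r]"
| "leaves (Node c l s rt) = leaves l @ leaves rt"

fun height :: "tree \<Rightarrow> nat" where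
  "height (Leaf r) = 0"
| "height (Node c l s rt) = Suc (max (height l) (height rt))"

fun subtrees :: "tree \<Rightarrow> tree set" where
  "subtrees (Leaf r) = {Leaf r}"
| "subtrees (Node c l s rt) = insert (Node c l s rt) (subtrees l \<union> subtrees rt)"

fun is_node :: "tree \<Rightarrow> bool" where
  "is_node (Leaf r) = False"
| "is_node (Node c l s rt) = True"

fun right :: "tree \<Rightarrow> tree" where
  "right (Node c l s rt) = rt"
| "right (Leaf r) = Leaf r"

fun search_tree :: "tree \<Rightarrow> bool" where
  "search_tree (Leaf r) = True"
| "search_tree (Node c l s rt) \<longleftrightarrow>
     (\<forall>r\<in>set (leaves l). fst r < s) \<and> (\<forall>r\<in>set (leaves rt). s < fst r) \<and>
     search_tree l \<and> search_tree rt"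

fun col_of :: "tree \<Rightarrow> color" where
  "col_of (Leaf r) = Black"
| "col_of (Node c l s rt) = c"

fun bheight :: "tree \<Rightarrow> nat" where
  "bheight (Leaf r) = 1"
| "bheight (Node c l s rt) = (if c = Black then Suc (bheight l) else bheight l)"

fun red_black :: "tree \<Rightarrow> bool" where
  "red_black (Leaf r) = True"
| "red_black (Node c l s rt) \<longleftrightarrow>
     red_black l \<and> red_black rt \<and> bheight l = bheight rt \<and>
     (c = Red \<longrightarrow> col_of l = Black \<and> col_of rt = Black)"

definition rmax :: "tree \<Rightarrow> rect" where
  "rmax v = (ARG_MAX snd r. r \<in> set (leaves v))"

text \<open>col(r) = max height over N(r): the leaf storing r (height 0) and all internal
  nodes v with r_max(right v) = r.\<close>
definition colr :: "tree \<Rightarrow> rect \<Rightarrow> nat" where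
  "colr T r = Max (insert 0 (height ` {v \<in> subtrees T. is_node v \<and> rmax (right v) = r}))"

end

theory Submission
  imports Defs
begin

lemma leaves_ne: "leaves t \<noteq> []"
  by (induction t) auto

lemma rmax_prop:
  "rmax v \<in> set (leaves v) \<and> (\<forall>r\<in>set (leaves v). snd r \<le> snd (rmax v))"
proof -
  let ?A = "set (leaves v)"
  have fin: "finite (snd ` ?A)" and ne: "snd ` ?A \<noteq> {}" using leaves_ne by auto
  obtain x where x: "x \<in> ?A" "snd x = Max (snd ` ?A)"
    using Max_in[OF fin ne] by auto
  have "is_arg_max snd (\<lambda>r. r \<in> ?A) x"
    unfolding is_arg_max_linorder using x fin by auto
  then have "is_arg_max snd (\<lambda>r. r \<in> ?A) (rmax v)"
    unfolding rmax_def arg_max_def by (rule someI)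
  then show ?thesis unfolding is_arg_max_linorder by auto
qed

lemma subtrees_leaves: "v \<in> subtrees t \<Longrightarrow> set (leaves v) \<subseteq> set (leaves t)"
  by (induction t) auto

lemma subtrees_height: "v \<in> subtrees t \<Longrightarrow> height v \<le> height t"
  by (induction t) auto

lemma subtrees_finite: "finite (subtrees t)"
  by (induction t) auto

lemma leaf_in_subtrees: "r \<in> set (leaves t) \<Longrightarrow> Leaf r \<in> subtrees t"
  by (induction t) auto

lemma right_leaves: "is_node w \<Longrightarrow> set (leaves (right w)) \<subseteq> set (leaves w)"
  by (cases w) auto

lemma keyL:
  assumes "search_tree t" "v1 \<in> subtrees t" "v2 \<in> subtrees t" "v1 \<noteq> v2"
    "height v1 = height v2" "r1 \<in> set (leaves v1)" "r2 \<in> set (leaves v2)" "fst r1 < fst r2"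
  shows "\<exists>w\<in>subtrees t. is_node w \<and> height w > height v1 \<and>
     (\<forall>a\<in>set (leaves v1). \<forall>b\<in>set (leaves (right w)). fst a < fst b) \<and>
     set (leaves v2) \<subseteq> set (leaves (right w))"
  using assms
proof (induction t)
  case (Leaf r)
  then show ?case by auto
next
  case (Node c l s rt)
  let ?T = "Node c l s rt"
  have hl: "height l < height ?T" and hr: "height rt < height ?T" by auto
  have nT1: "v1 \<noteq> ?T"
  proof
    assume "v1 = ?T"
    then have "v2 \<in> subtrees l \<union> subtrees rt" using Node.prems by auto
    then have "height v2 < height ?T" using subtrees_height hl hr by fastforce
    then show False using Node.prems \<open>v1 = ?T\<close> by auto
  qed
  have nT2: "v2 \<noteq> ?T"
  proof
    assume "v2 = ?T"
    then have "v1 \<in> subtrees l \<union> subtrees rt" using Node.prems by auto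
    then have "height v1 < height ?T" using subtrees_height hl hr by fastforce
    then show False using Node.prems \<open>v2 = ?T\<close> by auto
  qed
  have v1: "v1 \<in> subtrees l \<union> subtrees rt" and v2: "v2 \<in> subtrees l \<union> subtrees rt"
    using Node.prems nT1 nT2 by auto
  have st: "search_tree l" "search_tree rt" using Node.prems by auto
  show ?case
  proof (cases "v1 \<in> subtrees l")
    case True note a = this
    show ?thesis
    proof (cases "v2 \<in> subtrees l")
      case True
      then show ?thesis using Node.IH(1)[OF st(1) a True] Node.prems by auto
    next
      case False
      then have b: "v2 \<in> subtrees rt" using v2 by auto
      have "height v1 \<le> height l" using subtrees_height[OF a] .
      moreover have "\<forall>x\<in>set (leaves v1). \<forall>y\<in>set (leaves rt). fst x < fst y"
        using subtrees_leaves[OF a] Node.prems(1) by fastforce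
      ultimately show ?thesis using subtrees_leaves[OF b] hl
        by (intro bexI[of _ ?T]) auto
    qed
  next
    case False
    then have a: "v1 \<in> subtrees rt" using v1 by auto
    show ?thesis
    proof (cases "v2 \<in> subtrees rt")
      case True
      then show ?thesis using Node.IH(2)[OF st(2) a True] Node.prems by auto
    next
      case False
      then have b: "v2 \<in> subtrees l" using v2 by auto
      have "r1 \<in> set (leaves rt)" "r2 \<in> set (leaves l)"
        using subtrees_leaves[OF a] subtrees_leaves[OF b] Node.prems by auto
      then have "fst r2 < fst r1" using Node.prems(1) by fastforce
      then show ?thesis using Node.prems by auto
    qed
  qed
qed

lemma witness:
  assumes "r \<in> set (leaves T)"
  shows "\<exists>v\<in>subtrees T. height v = colr T r \<and> r \<in> set (leaves v) \<and>
           (v = Leaf r \<or> (is_node v \<and> rmax (right v) = r))"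
proof -
  let ?A = "{v \<in> subtrees T. is_node v \<and> rmax (right v) = r}"
  have fin: "finite (insert 0 (height ` ?A))" using subtrees_finite by auto
  have "colr T r \<in> insert 0 (height ` ?A)"
    unfolding colr_def by (rule Max_in[OF fin]) auto
  then show ?thesis
  proof
    assume "colr T r = 0"
    then show ?thesis using leaf_in_subtrees[OF assms] by (intro bexI[of _ "Leaf r"]) auto
  next
    assume "colr T r \<in> height ` ?A"
    then obtain v where v: "v \<in> ?A" "height v = colr T r" by auto
    have "r \<in> set (leaves v)" using rmax_prop[of "right v"] right_leaves[of v] v by auto
    then show ?thesis using v by auto
  qed
qed

lemma colr_ge:
  assumes "w \<in> subtrees T" "is_node w"
  shows "height w \<le> colr T (rmax (right w))"
  unfolding colr_def
  by (rule Max_ge) (use assms subtrees_finite in auto)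

lemma same_witness:
  assumes "v = Leaf r \<or> (is_node v \<and> rmax (right v) = r)"
    "v = Leaf r' \<or> (is_node v \<and> rmax (right v) = r')"
  shows "r = r'"
  using assms by (cases v) auto

theorem mainTheorem1:
  fixes S :: "rect set" and T :: tree
  assumes "finite S"
    and "\<forall>r\<in>S. anchored r"
    and "inj_on fst S" and "inj_on snd S"
    and "set (leaves T) = S" and "distinct (leaves T)"
    and "search_tree T" and "red_black T"
  shows "\<forall>q :: real \<times> real. (\<exists>r\<in>S. contains r q) \<longrightarrow>
           (\<exists>r\<in>S. contains r q \<and>
              (\<forall>r'\<in>S. r' \<noteq> r \<and> contains r' q \<longrightarrow> colr T r' \<noteq> colr T r))"
proof (intro allI impI)
  fix q :: "real \<times> real"
  assume "\<exists>r\<in>S. contains r q"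
  let ?Sq = "{r\<in>S. contains r q}"
  have fin: "finite (colr T ` ?Sq)" using assms(1) by auto
  have ne: "colr T ` ?Sq \<noteq> {}" using \<open>\<exists>r\<in>S. contains r q\<close> by auto
  obtain r where r: "r \<in> ?Sq" "colr T r = Max (colr T ` ?Sq)"
    using Max_in[OF fin ne] by auto
  have maxc: "\<And>x. x \<in> ?Sq \<Longrightarrow> colr T x \<le> colr T r"
    using r fin by auto
  have q0: "0 \<le> fst q" "0 \<le> snd q" using r unfolding contains_def by auto
  have contra: False if
    A: "r1 \<in> ?Sq" "r2 \<in> ?Sq" "r1 \<noteq> r2" "colr T r1 = colr T r" "colr T r2 = colr T r"
       "fst r1 < fst r2" for r1 r2
  proof -
    obtain v1 where v1: "v1 \<in> subtrees T" "height v1 = colr T r1" "r1 \<in> set (leaves v1)"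
      "v1 = Leaf r1 \<or> (is_node v1 \<and> rmax (right v1) = r1)"
      using witness[of r1 T] A assms(5) by auto
    obtain v2 where v2: "v2 \<in> subtrees T" "height v2 = colr T r2" "r2 \<in> set (leaves v2)"
      "v2 = Leaf r2 \<or> (is_node v2 \<and> rmax (right v2) = r2)"
      using witness[of r2 T] A assms(5) by auto
    have "v1 \<noteq> v2" using same_witness v1(4) v2(4) A(3) by metis
    then obtain w where w: "w \<in> subtrees T" "is_node w" "height w > height v1"
      "\<forall>a\<in>set (leaves v1). \<forall>b\<in>set (leaves (right w)). fst a < fst b"
      "set (leaves v2) \<subseteq> set (leaves (right w))"
      using keyL[OF assms(7) v1(1) v2(1) _ _ v1(3) v2(3) A(6)] v1(2) v2(2) A by auto
    let ?r3 = "rmax (right w)"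
    have r3: "?r3 \<in> set (leaves (right w))" "snd r2 \<le> snd ?r3"
      using rmax_prop[of "right w"] w(5) v2(3) by auto
    have "fst r1 < fst ?r3" using w(4) v1(3) r3(1) by auto
    moreover have "?r3 \<in> S"
      using r3(1) right_leaves[OF w(2)] subtrees_leaves[OF w(1)] assms(5) by auto
    ultimately have "?r3 \<in> ?Sq" using A(1,2) r3(2) q0 unfolding contains_def by auto
    then have "colr T ?r3 \<le> colr T r" using maxc by blast
    moreover have "height w \<le> colr T ?r3" using colr_ge[OF w(1,2)] .
    ultimately show False using w(3) v1(2) A(4) by auto
  qed
  show "\<exists>r\<in>S. contains r q \<and>
              (\<forall>r'\<in>S. r' \<noteq> r \<and> contains r' q \<longrightarrow> colr T r' \<noteq> colr T r)"
  proof (intro bexI[of _ r] conjI ballI impI)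
    show "r \<in> S" "contains r q" using r by auto
  next
    fix r' assume r': "r' \<in> S" "r' \<noteq> r \<and> contains r' q"
    show "colr T r' \<noteq> colr T r"
    proof
      assume eq: "colr T r' = colr T r"
      have "fst r' \<noteq> fst r" using assms(3) r' r unfolding inj_on_def by auto
      then show False
      proof (cases "fst r' < fst r")
        case True
        then show ?thesis using contra[of r' r] r r' eq by auto
      next
        case False
        then show ?thesis using contra[of r r'] r r' eq \<open>fst r' \<noteq> fst r\<close> by auto
      qed
    qed
  qed
qed

end
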